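(* Let $\mathbf A$ and $\mathbf B$ be algebras on the same underlying set $A$ such that some ternary operation $q$ is a Mal'cev term operation of both, and let $n\ge1$ and $\alpha_0,\dots,\alpha_{n-1}$ be equivalence relations on $A$ that are congruences of both $\mathbf A$ and $\mathbf B$. Then $[\alpha_i\mid i\in I]_{\mathbf A}=[\alpha_i\mid i\in I]_{\mathbf B}$ for all nonempty $I\subseteq\{0,\dots,n-1\}$ if and only if $\Delta_{\mathbf A}(\alpha_0,\dots,\alpha_{n-1})=\Delta_{\mathbf B}(\alpha_0,\dots,\alpha_{n-1})$.
   Context: A Mal'cev term operation is a ternary term operation $q$ with $q(x,x,y)=y=q(y,x,x)$. $[\cdots]_{\mathbf X}$ denotes the commutator computed in the algebra $\mathbf X$, and $[\alpha_i\mid i\in I]$ means $[\alpha_{i_0},\dots,\alpha_{i_{k-1}}]$ where $I=\{i_0<\dots<i_{k-1}\}$. Higher commutator (Bulatov): in an algebra $\mathbf X$, for congruences $\beta_0,\dots,\beta_{m-1},\gamma$, say $\beta_0,\dots,\beta_{m-2}$ centralize $\beta_{m-1}$ modulo $\gamma$ if for all tuples $\mathbf a_i,\mathbf b_i$ ($i<m$, with $\mathbf a_i\neq\mathbf b_i$ congruent modulo $\beta_i$ coordinatewise) and every term operation $t$ of $\mathbf X$ such that $t(\mathbf x_0,\dots,\mathbf x_{m-2},\mathbf a_{m-1})\equiv_\gamma t(\mathbf x_0,\dots,\mathbf x_{m-2},\mathbf b_{m-1})$ for all $(\mathbf x_0,\dots,\mathbf x_{m-2})\in(\{\mathbf a_0,\mathbf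 b_0\}\times\dots\times\{\mathbf a_{m-2},\mathbf b_{m-2}\})\setminus\{(\mathbf b_0,\dots,\mathbf b_{m-2})\}$, we have $t(\mathbf b_0,\dots,\mathbf b_{m-2},\mathbf a_{m-1})\equiv_\gamma t(\mathbf b_0,\dots,\mathbf b_{m-2},\mathbf b_{m-1})$. $[\beta_0,\dots,\beta_{m-1}]_{\mathbf X}$ is the smallest such $\gamma$. For $k\ge0$, $k_{(i)}$ is the $i$-th binary digit of $k$ (least significant is $i=0$). For $a,b\in A$ and $i<n$, $\mathbf c_i^n(a,b)\in A^{2^n}$ has $k$-th coordinate $a$ if $k_{(i)}=0$ and $b$ if $k_{(i)}=1$. $\Delta_{\mathbf X}(\alpha_0,\dots,\alpha_{n-1})$ is the subuniverse of $\mathbf X^{2^n}$ generated by $\{\mathbf c_i^n(a,b): i<n,\ (a,b)\in\alpha_i\}$. *)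

theory Defs
  imports Main
begin

text \<open>An algebra is given by its underlying set A and a set F of fundamental
operations; each operation is a pair (n, f) with arity n, where f is applied to
argument lists of length n.\<close>

type_synonym 'a ops = "(nat \<times> ('a list \<Rightarrow> 'a)) set"

definition is_algebra :: "'a set \<Rightarrow> 'a ops \<Rightarrow> bool" where
  "is_algebra A F \<longleftrightarrow> A \<noteq> {} \<and>
     (\<forall>(n, f) \<in> F. \<forall>xs. length xs = n \<and> set xs \<subseteq> A \<longrightarrow> f xs \<in> A)"

inductive_set termops :: "'a ops \<Rightarrow> nat \<Rightarrow> ('a list \<Rightarrow> 'a) set"
  for F :: "'a ops" and k :: nat where
  proj: "i < k \<Longrightarrow> (\<lambda>xs. xs ! i) \<in> termops F k"
| comp: "(n, f) \<in> F \<Longrightarrow> length gs = n \<Longrightarrow> (\<forall>g \<in> set gs. g \<in> termops F k)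
          \<Longrightarrow> (\<lambda>xs. f (map (\<lambda>g. g xs) gs)) \<in> termops F k"

definition is_term_op :: "'a set \<Rightarrow> 'a ops \<Rightarrow> nat \<Rightarrow> ('a list \<Rightarrow> 'a) \<Rightarrow> bool" where
  "is_term_op A F k q \<longleftrightarrow>
     (\<exists>t \<in> termops F k. \<forall>xs. length xs = k \<and> set xs \<subseteq> A \<longrightarrow> t xs = q xs)"

definition is_malcev :: "'a set \<Rightarrow> 'a ops \<Rightarrow> ('a list \<Rightarrow> 'a) \<Rightarrow> bool" where
  "is_malcev A F q \<longleftrightarrow> is_term_op A F 3 q \<and>
     (\<forall>x \<in> A. \<forall>y \<in> A. q [x, x, y] = y \<and> q [y, x, x] = y)"

definition congruence :: "'a set \<Rightarrow> 'a ops \<Rightarrow> ('a \<times> 'a) set \<Rightarrow> bool" where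
  "congruence A F \<alpha> \<longleftrightarrow> equiv A \<alpha> \<and>
     (\<forall>(n, f) \<in> F. \<forall>xs ys. length xs = n \<and> length ys = n \<and>
        list_all2 (\<lambda>x y. (x, y) \<in> \<alpha>) xs ys \<longrightarrow> (f xs, f ys) \<in> \<alpha>)"

text \<open>Bulatov's centrality condition: \<beta>_0,...,\<beta>_{m-2} centralize \<beta>_{m-1} modulo \<gamma>,
where \<beta>s = [\<beta>_0,...,\<beta>_{m-1}]. The tuples a_i, b_i are the lists as!i, bs!i;
the term operation t takes the concatenation of its m argument tuples.\<close>

definition pick :: "nat \<Rightarrow> (nat \<Rightarrow> bool) \<Rightarrow> 'a list list \<Rightarrow> 'a list list \<Rightarrow> 'a list list" where
  "pick l e as bs = map (\<lambda>i. if e i then bs ! i else as ! i) [0..<l]"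

definition centralizes :: "'a set \<Rightarrow> 'a ops \<Rightarrow> ('a \<times> 'a) set list \<Rightarrow> ('a \<times> 'a) set \<Rightarrow> bool" where
  "centralizes A F \<beta>s \<gamma> \<longleftrightarrow>
     (\<forall>as bs t. length as = length \<beta>s \<and> length bs = length \<beta>s \<and>
        (\<forall>i < length \<beta>s. length (as ! i) = length (bs ! i) \<and> as ! i \<noteq> bs ! i \<and>
            list_all2 (\<lambda>x y. (x, y) \<in> \<beta>s ! i) (as ! i) (bs ! i)) \<and>
        t \<in> termops F (length (concat as)) \<and>
        (\<forall>e. (\<exists>i < length \<beta>s - 1. \<not> e i) \<longrightarrow>
            (t (concat (pick (length \<beta>s - 1) e as bs @ [as ! (length \<beta>s - 1)])),
             t (concat (pick (length \<beta>s - 1) e as bs @ [bs ! (length \<beta>s - 1)]))) \<in> \<gamma>)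
      \<longrightarrow> (t (concat (take (length \<beta>s - 1) bs @ [as ! (length \<beta>s - 1)])),
           t (concat bs)) \<in> \<gamma>)"

definition commutator :: "'a set \<Rightarrow> 'a ops \<Rightarrow> ('a \<times> 'a) set list \<Rightarrow> ('a \<times> 'a) set" where
  "commutator A F \<beta>s = \<Inter> {\<gamma>. congruence A F \<gamma> \<and> centralizes A F \<beta>s \<gamma>}"

definition commutator_idx :: "'a set \<Rightarrow> 'a ops \<Rightarrow> (nat \<Rightarrow> ('a \<times> 'a) set) \<Rightarrow> nat set \<Rightarrow> ('a \<times> 'a) set" where
  "commutator_idx A F \<alpha> I = commutator A F (map \<alpha> (sorted_list_of_set I))"

text \<open>Elements of A^(2^n) are lists of length 2^n; c_i^n(a,b).\<close>
definition cvec :: "nat \<Rightarrow> nat \<Rightarrow> 'a \<Rightarrow> 'a \<Rightarrow> 'a list" where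
  "cvec n i a b = map (\<lambda>k. if (k div 2 ^ i) mod 2 = 0 then a else b) [0..<2 ^ n]"

text \<open>\<Delta>(\<alpha>_0,...,\<alpha>_{n-1}): the subuniverse of the power algebra X^(2^n) generated by the
c_i^n(a,b) (operations act coordinatewise).\<close>
inductive_set Delta :: "'a set \<Rightarrow> 'a ops \<Rightarrow> nat \<Rightarrow> (nat \<Rightarrow> ('a \<times> 'a) set) \<Rightarrow> 'a list set"
  for A :: "'a set" and F :: "'a ops" and n :: nat and \<alpha> :: "nat \<Rightarrow> ('a \<times> 'a) set" where
  gen: "i < n \<Longrightarrow> (a, b) \<in> \<alpha> i \<Longrightarrow> cvec n i a b \<in> Delta A F n \<alpha>"
| op: "(k, f) \<in> F \<Longrightarrow> length vs = k \<Longrightarrow> (\<forall>v \<in> set vs. v \<in> Delta A F n \<alpha>)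
        \<Longrightarrow> map (\<lambda>j. f (map (\<lambda>v. v ! j) vs)) [0..<2 ^ n] \<in> Delta A F n \<alpha>"

end

theory Submission
  imports Defs
begin

fun mk :: "nat \<Rightarrow> (nat \<Rightarrow> bool) \<Rightarrow> nat" where
  "mk 0 P = 0"
| "mk (Suc n) P = of_bool (P 0) + 2 * mk n (\<lambda>i. P (Suc i))"

lemma mk_less: "mk n P < 2 ^ n"
proof (induction n arbitrary: P)
  case 0 then show ?case by simp
next
  case (Suc n)
  have "mk n (\<lambda>i. P (Suc i)) < 2^n" by (rule Suc.IH)
  then show ?case by (cases "P 0") auto
qed

lemma bit_mk: "bit (mk n P) j \<longleftrightarrow> j < n \<and> P j"
proof (induction n arbitrary: P j)
  case 0 then show ?case by simp
next
  case (Suc n)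
  show ?case
  proof (cases j)
    case 0 then show ?thesis by (simp add: bit_0)
  next
    case (Suc j')
    have "(of_bool (P 0) + 2 * mk n (\<lambda>i. P (Suc i))) div 2 = mk n (\<lambda>i. P (Suc i))" by (cases "P 0") auto
    then show ?thesis using Suc Suc.IH by (simp add: bit_Suc)
  qed
qed

lemma bit_nat_high: "(k::nat) < 2 ^ n \<Longrightarrow> bit k j \<Longrightarrow> j < n"
proof -
  assume "k < 2^n" "bit k j"
  then have "take_bit n k = k" by (simp add: take_bit_nat_eq_self_iff)
  then have "bit (take_bit n k) j" using \<open>bit k j\<close> by simp
  then show "j < n" by (simp add: bit_take_bit_iff)
qed

lemma mk_bit: "(k::nat) < 2 ^ n \<Longrightarrow> mk n (bit k) = k"
  by (rule bit_eqI) (auto simp: bit_mk dest: bit_nat_high)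

lemma mk_eq_iff: "mk n P = mk n Q \<longleftrightarrow> (\<forall>i<n. P i = Q i)"
proof
  assume "mk n P = mk n Q"
  then show "\<forall>i<n. P i = Q i" by (metis bit_mk)
next
  assume "\<forall>i<n. P i = Q i"
  then show "mk n P = mk n Q" by (intro bit_eqI) (auto simp: bit_mk)
qed

lemma mk_mono: "(\<forall>i<n. P i \<longrightarrow> Q i) \<Longrightarrow> mk n P \<le> mk n Q"
proof (induction n arbitrary: P Q)
  case 0 then show ?case by simp
next
  case (Suc n)
  have "mk n (\<lambda>i. P (Suc i)) \<le> mk n (\<lambda>i. Q (Suc i))" using Suc by auto
  then show ?case using Suc.prems by (cases "P 0"; cases "Q 0") auto
qed

lemma bits_le: "(k::nat) < 2 ^ n \<Longrightarrow> j < 2 ^ n \<Longrightarrow> (\<forall>i<n. bit k i \<longrightarrow> bit j i) \<Longrightarrow> k \<le> j"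
  by (metis mk_bit mk_mono)

lemma cvec_nth: "k < 2 ^ n \<Longrightarrow> cvec n i a b ! k = (if bit k i then b else a)"
  by (simp add: cvec_def bit_iff_odd even_iff_mod_2_eq_zero)

lemma length_cvec[simp]: "length (cvec n i a b) = 2 ^ n"
  by (simp add: cvec_def)

lemma termops_A:
  assumes alg: "is_algebra A F"
  shows "t \<in> termops F K \<Longrightarrow> length xs = K \<Longrightarrow> set xs \<subseteq> A \<Longrightarrow> t xs \<in> A"
proof (induction t rule: termops.induct)
  case (proj i) then show ?case by auto
next
  case (comp n f gs)
  have "\<forall>g\<in>set gs. g xs \<in> A" using comp by auto
  then have "set (map (\<lambda>g. g xs) gs) \<subseteq> A" by auto
  then show ?case using alg comp.hyps unfolding is_algebra_def by fastforce
qed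

lemma Delta_len: "v \<in> Delta A F n \<alpha> \<Longrightarrow> length v = 2 ^ n"
  by (induction rule: Delta.induct) (auto simp: cvec_def)

lemma Delta_A:
  assumes alg: "is_algebra A F" and al: "\<forall>i<n. \<alpha> i \<subseteq> A \<times> A"
  shows "v \<in> Delta A F n \<alpha> \<Longrightarrow> set v \<subseteq> A"
proof (induction rule: Delta.induct)
  case (gen i a b)
  then show ?case using al by (auto simp: cvec_def)
next
  case (op k f vs)
  show ?case
  proof
    fix x assume "x \<in> set (map (\<lambda>j. f (map (\<lambda>v. v ! j) vs)) [0..<2 ^ n])"
    then obtain j where j: "j < 2^n" "x = f (map (\<lambda>v. v ! j) vs)" by auto
    have "set (map (\<lambda>v. v ! j) vs) \<subseteq> A"
    proof
      fix y assume "y \<in> set (map (\<lambda>v. v ! j) vs)"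
      then obtain v where v: "v \<in> set vs" "y = v ! j" by auto
      then have "v \<in> Delta A F n \<alpha>" "set v \<subseteq> A" using op by auto
      then show "y \<in> A" using v j Delta_len[of v] by (metis nth_mem subsetD)
    qed
    then show "x \<in> A" using alg op.hyps j unfolding is_algebra_def by fastforce
  qed
qed

lemma Delta_term:
  "t \<in> termops F K \<Longrightarrow> length vs = K \<Longrightarrow> \<forall>v\<in>set vs. v \<in> Delta A F n \<alpha>
   \<Longrightarrow> map (\<lambda>j. t (map (\<lambda>v. v ! j) vs)) [0..<2 ^ n] \<in> Delta A F n \<alpha>"
proof (induction t rule: termops.induct)
  case (proj i)
  then have "vs ! i \<in> Delta A F n \<alpha>" by auto
  moreover have "map (\<lambda>j. map (\<lambda>v. v ! j) vs ! i) [0..<2 ^ n] = vs ! i"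
    using proj Delta_len[OF calculation] by (intro nth_equalityI) auto
  ultimately show ?case by simp
next
  case (comp m f gs)
  define vs' where "vs' = map (\<lambda>g. map (\<lambda>j. g (map (\<lambda>v. v ! j) vs)) [0..<2 ^ n]) gs"
  have h1: "\<forall>v\<in>set vs'. v \<in> Delta A F n \<alpha>" using comp by (auto simp: vs'_def)
  have h2: "length vs' = m" using comp by (simp add: vs'_def)
  have "map (\<lambda>j. f (map (\<lambda>v. v ! j) vs')) [0..<2 ^ n] \<in> Delta A F n \<alpha>"
    by (rule Delta.op[OF comp.hyps(1) h2 h1])
  moreover have "map (\<lambda>j. f (map (\<lambda>v. v ! j) vs')) [0..<2 ^ n]
      = map (\<lambda>j. f (map (\<lambda>g. g (map (\<lambda>v. v ! j) vs)) gs)) [0..<2 ^ n]"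
    by (auto simp: vs'_def comp_def)
  ultimately show ?case by simp
qed

lemma Delta_q:
  assumes alg: "is_algebra A F" and al: "\<forall>i<n. \<alpha> i \<subseteq> A \<times> A" and qt: "is_term_op A F 3 q"
    and u: "u \<in> Delta A F n \<alpha>" and v: "v \<in> Delta A F n \<alpha>" and w: "w \<in> Delta A F n \<alpha>"
  shows "map (\<lambda>j. q [u ! j, v ! j, w ! j]) [0..<2 ^ n] \<in> Delta A F n \<alpha>"
proof -
  obtain t where t: "t \<in> termops F 3" "\<forall>xs. length xs = 3 \<and> set xs \<subseteq> A \<longrightarrow> t xs = q xs"
    using qt unfolding is_term_op_def by blast
  have "map (\<lambda>j. t (map (\<lambda>v. v ! j) [u, v, w])) [0..<2 ^ n] \<in> Delta A F n \<alpha>"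
    using Delta_term[OF t(1), of "[u,v,w]"] u v w by simp
  moreover have "map (\<lambda>j. t (map (\<lambda>v. v ! j) [u, v, w])) [0..<2 ^ n]
       = map (\<lambda>j. q [u ! j, v ! j, w ! j]) [0..<2 ^ n]"
  proof (rule map_cong[OF refl])
    fix j assume "j \<in> set [0..<2^n]"
    moreover have "length u = 2^n" "length v = 2^n" "length w = 2^n" using Delta_len[OF u] Delta_len[OF v] Delta_len[OF w] by auto
    ultimately have "u ! j \<in> A" "v ! j \<in> A" "w ! j \<in> A"
      using Delta_A[OF alg al] Delta_len u v w by (auto intro!: nth_mem[THEN subsetD[rotated]])
    then show "t (map (\<lambda>v. v ! j) [u, v, w]) = q [u ! j, v ! j, w ! j]" using t(2) by simp
  qed
  ultimately show ?thesis by metis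
qed

lemma Delta_reindex:
  assumes rho: "\<forall>k<2^n'. \<rho> k < 2^n"
    and gens: "\<forall>i<n. \<forall>a b. (a, b) \<in> \<alpha> i \<longrightarrow> map (\<lambda>k. cvec n i a b ! \<rho> k) [0..<2^n'] \<in> Delta A F n' \<beta>"
  shows "v \<in> Delta A F n \<alpha> \<Longrightarrow> map (\<lambda>k. v ! \<rho> k) [0..<2^n'] \<in> Delta A F n' \<beta>"
proof (induction rule: Delta.induct)
  case (gen i a b) then show ?case using gens by auto
next
  case (op k f vs)
  define vs' where "vs' = map (\<lambda>v. map (\<lambda>k. v ! \<rho> k) [0..<2^n']) vs"
  have "map (\<lambda>j. f (map (\<lambda>v. v ! j) vs')) [0..<2^n'] \<in> Delta A F n' \<beta>"
    using op by (intro Delta.op[of k f]) (auto simp: vs'_def)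
  moreover have "map (\<lambda>j. f (map (\<lambda>v. v ! j) vs')) [0..<2^n'] =
     map (\<lambda>ka. map (\<lambda>j. f (map (\<lambda>v. v ! j) vs)) [0..<2 ^ n] ! \<rho> ka) [0..<2 ^ n']"
    using rho by (auto simp: vs'_def comp_def)
  ultimately show ?case by simp
qed

lemma reindex_gen:
  assumes rho: "\<forall>k<2^n'. \<rho> k < 2^n"
    and beh: "(\<exists>j<n'. (\<forall>k<2^n'. bit (\<rho> k) i = bit k j) \<and> (a,b) \<in> \<beta> j)
      \<or> ((\<forall>k<2^n'. \<not> bit (\<rho> k) i) \<and> (a,a) \<in> \<beta> 0 \<and> 0 < n')
      \<or> ((\<forall>k<2^n'. bit (\<rho> k) i) \<and> (b,b) \<in> \<beta> 0 \<and> 0 < n')"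
  shows "map (\<lambda>k. cvec n i a b ! \<rho> k) [0..<2^n'] \<in> Delta A F n' \<beta>"
  using beh
proof (elim disjE conjE exE)
  fix j assume j: "j < n'" "\<forall>k<2^n'. bit (\<rho> k) i = bit k j" "(a,b) \<in> \<beta> j"
  have "map (\<lambda>k. cvec n i a b ! \<rho> k) [0..<2^n'] = cvec n' j a b"
    using rho j by (intro nth_equalityI) (auto simp: cvec_nth)
  then show ?thesis using Delta.gen[of j n' a b \<beta> A F, OF j(1) j(3)] by simp
next
  assume h: "\<forall>k<2^n'. \<not> bit (\<rho> k) i" "(a,a) \<in> \<beta> 0" "0 < n'"
  have "map (\<lambda>k. cvec n i a b ! \<rho> k) [0..<2^n'] = cvec n' 0 a a"
    using rho h by (intro nth_equalityI) (auto simp: cvec_nth)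
  then show ?thesis using Delta.gen[of 0 n' a a \<beta> A F, OF h(3) h(2)] by simp
next
  assume h: "\<forall>k<2^n'. bit (\<rho> k) i" "(b,b) \<in> \<beta> 0" "0 < n'"
  have "map (\<lambda>k. cvec n i a b ! \<rho> k) [0..<2^n'] = cvec n' 0 b b"
    using rho h by (intro nth_equalityI) (auto simp: cvec_nth)
  then show ?thesis using Delta.gen[of 0 n' b b \<beta> A F, OF h(3) h(2)] by simp
qed


lemma cong_sub: "congruence A F \<gamma> \<Longrightarrow> (x, y) \<in> \<gamma> \<Longrightarrow> x \<in> A \<and> y \<in> A"
  unfolding congruence_def equiv_def refl_on_def by blast

lemma cong_term:
  assumes cg: "congruence A F \<gamma>"
  shows "t \<in> termops F K \<Longrightarrow> list_all2 (\<lambda>x y. (x, y) \<in> \<gamma>) xs ys \<Longrightarrow> length xs = K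
     \<Longrightarrow> (t xs, t ys) \<in> \<gamma>"
proof (induction t rule: termops.induct)
  case (proj i) then show ?case by (auto dest: list_all2_nthD)
next
  case (comp n f gs)
  have "list_all2 (\<lambda>x y. (x, y) \<in> \<gamma>) (map (\<lambda>g. g xs) gs) (map (\<lambda>g. g ys) gs)"
    using comp by (auto simp: list_all2_conv_all_nth)
  then show ?case using cg comp.hyps unfolding congruence_def by fastforce
qed

lemma cong_q:
  assumes cg: "congruence A F \<gamma>" and qt: "is_term_op A F 3 q"
    and h: "(x1, y1) \<in> \<gamma>" "(x2, y2) \<in> \<gamma>" "(x3, y3) \<in> \<gamma>"
  shows "(q [x1, x2, x3], q [y1, y2, y3]) \<in> \<gamma>"
proof -
  obtain t where t: "t \<in> termops F 3" "\<forall>xs. length xs = 3 \<and> set xs \<subseteq> A \<longrightarrow> t xs = q xs"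
    using qt unfolding is_term_op_def by blast
  have A: "x1 \<in> A" "x2 \<in> A" "x3 \<in> A" "y1 \<in> A" "y2 \<in> A" "y3 \<in> A"
    using cong_sub[OF cg] h by auto
  have "(t [x1, x2, x3], t [y1, y2, y3]) \<in> \<gamma>"
    using cong_term[OF cg t(1), of "[x1,x2,x3]" "[y1,y2,y3]"] h by simp
  then show ?thesis using t(2) A by simp
qed

lemma termops_proj: "p < K \<Longrightarrow> (\<lambda>xs. xs ! p) \<in> termops F K"
  by (rule termops.proj)

lemma termops_subst:
  "g \<in> termops F K' \<Longrightarrow> (\<forall>p<K'. h p \<in> termops F K)
   \<Longrightarrow> (\<lambda>xs. g (map (\<lambda>p. h p xs) [0..<K'])) \<in> termops F K"
proof (induction g rule: termops.induct)
  case (proj i)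
  then have "(\<lambda>xs. map (\<lambda>p. h p xs) [0..<K'] ! i) = h i" by auto
  then show ?case using proj by simp
next
  case (comp n f gs)
  define gs' where "gs' = map (\<lambda>g. \<lambda>xs. g (map (\<lambda>p. h p xs) [0..<K'])) gs"
  have "(\<lambda>xs. f (map (\<lambda>g. g xs) gs')) \<in> termops F K"
    using comp by (intro termops.comp) (auto simp: gs'_def)
  then show ?case by (simp add: gs'_def comp_def)
qed

definition ev :: "nat \<Rightarrow> nat \<times> 'a \<times> 'a \<Rightarrow> 'a" where
  "ev k g = (case g of (i, a, b) \<Rightarrow> if bit k i then b else a)"

definition EV :: "nat \<Rightarrow> (nat \<times> 'a \<times> 'a) list \<Rightarrow> ('a list \<Rightarrow> 'a) \<Rightarrow> 'a list" where
  "EV n gs t = map (\<lambda>k. t (map (ev k) gs)) [0..<2 ^ n]"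

definition gens_ok :: "nat \<Rightarrow> (nat \<Rightarrow> ('a \<times> 'a) set) \<Rightarrow> (nat \<times> 'a \<times> 'a) list \<Rightarrow> bool" where
  "gens_ok n \<alpha> gs \<longleftrightarrow> (\<forall>(i, a, b) \<in> set gs. i < n \<and> (a, b) \<in> \<alpha> i)"

lemma multi_rep:
  "\<forall>v\<in>set vs. \<exists>gs t. gens_ok n \<alpha> gs \<and> t \<in> termops F (length gs) \<and> v = EV n gs t
   \<Longrightarrow> \<exists>gs ts. gens_ok n \<alpha> gs \<and> length ts = length vs \<and> (\<forall>t\<in>set ts. t \<in> termops F (length gs))
        \<and> (\<forall>l<length vs. vs ! l = EV n gs (ts ! l))"
proof (induction vs)
  case Nil
  show ?case by (rule exI[of _ "[]"], rule exI[of _ "[]"]) (simp add: gens_ok_def)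
next
  case (Cons v vs)
  obtain gs1 t1 where 1: "gens_ok n \<alpha> gs1" "t1 \<in> termops F (length gs1)" "v = EV n gs1 t1"
    using Cons.prems by auto
  obtain gs2 ts2 where 2: "gens_ok n \<alpha> gs2" "length ts2 = length vs"
    "\<forall>t\<in>set ts2. t \<in> termops F (length gs2)" "\<forall>l<length vs. vs ! l = EV n gs2 (ts2 ! l)"
    using Cons by auto
  define L1 where "L1 = length gs1"
  define L2 where "L2 = length gs2"
  define t1' where "t1' = (\<lambda>xs. t1 (map (\<lambda>p. (\<lambda>xs. xs ! p) xs) [0..<L1]))"
  define sh :: "('a list \<Rightarrow> 'a) \<Rightarrow> 'a list \<Rightarrow> 'a" where "sh = (\<lambda>t. (\<lambda>xs. t (map (\<lambda>p. (\<lambda>xs. xs ! (L1 + p)) xs) [0..<L2])))"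
  have ok: "gens_ok n \<alpha> (gs1 @ gs2)" using 1 2 by (auto simp: gens_ok_def)
  have t1t: "t1' \<in> termops F (length (gs1 @ gs2))"
    unfolding t1'_def using 1(2) by (intro termops_subst) (auto simp: L1_def intro: termops_proj)
  have sht: "sh t \<in> termops F (length (gs1 @ gs2))" if "t \<in> set ts2" for t
    unfolding sh_def using 2(3) that by (intro termops_subst) (auto simp: L1_def L2_def intro: termops_proj)
  have e1: "EV n (gs1 @ gs2) t1' = v"
    unfolding 1(3) EV_def t1'_def
    by (intro map_cong[OF refl] arg_cong[of _ _ t1] nth_equalityI) (auto simp: L1_def nth_append)
  have e2: "EV n (gs1 @ gs2) (sh t) = EV n gs2 t" for t
    unfolding EV_def sh_def
    by (intro map_cong[OF refl] arg_cong[of _ _ t] nth_equalityI) (auto simp: L1_def L2_def nth_append)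
  show ?case
  proof (intro exI conjI)
    show "gens_ok n \<alpha> (gs1 @ gs2)" by (rule ok)
    show "length (t1' # map sh ts2) = length (v # vs)" using 2 by simp
    show "\<forall>t\<in>set (t1' # map sh ts2). t \<in> termops F (length (gs1 @ gs2))" using t1t sht by auto
    show "\<forall>l<length (v # vs). (v # vs) ! l = EV n (gs1 @ gs2) ((t1' # map sh ts2) ! l)"
    proof (intro allI impI)
      fix l assume "l < length (v # vs)"
      then show "(v # vs) ! l = EV n (gs1 @ gs2) ((t1' # map sh ts2) ! l)"
        using e1 e2 2 by (cases l) auto
    qed
  qed
qed

lemma Delta_rep:
  "v \<in> Delta A F n \<alpha> \<Longrightarrow> \<exists>gs t. gens_ok n \<alpha> gs \<and> t \<in> termops F (length gs) \<and> v = EV n gs t"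
proof (induction rule: Delta.induct)
  case (gen i a b)
  have "cvec n i a b = EV n [(i, a, b)] (\<lambda>xs. xs ! 0)"
    by (intro nth_equalityI) (auto simp: EV_def ev_def cvec_nth)
  moreover have "(\<lambda>xs. xs ! 0) \<in> termops F (length [(i, a, b)])" by (intro termops_proj) simp
  moreover have "gens_ok n \<alpha> [(i, a, b)]" using gen by (simp add: gens_ok_def)
  ultimately show ?case by blast
next
  case (op k f vs)
  have "\<forall>v\<in>set vs. \<exists>gs t. gens_ok n \<alpha> gs \<and> t \<in> termops F (length gs) \<and> v = EV n gs t"
    using op by blast
  from multi_rep[OF this] obtain gs ts where r: "gens_ok n \<alpha> gs" "length ts = length vs"
    "\<forall>t\<in>set ts. t \<in> termops F (length gs)" "\<forall>l<length vs. vs ! l = EV n gs (ts ! l)" by blast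
  define t where "t = (\<lambda>xs. f (map (\<lambda>g. g xs) ts))"
  have "t \<in> termops F (length gs)" unfolding t_def using op r by (intro termops.comp) auto
  moreover have "map (\<lambda>j. f (map (\<lambda>v. v ! j) vs)) [0..<2 ^ n] = EV n gs t"
    unfolding EV_def t_def
    by (intro map_cong[OF refl] arg_cong[of _ _ f] nth_equalityI) (auto simp: r EV_def)
  ultimately show ?case using r(1) by blast
qed


definition ecube :: "nat \<Rightarrow> (nat \<Rightarrow> bool) \<Rightarrow> 'a \<Rightarrow> 'a \<Rightarrow> 'a list" where
  "ecube n P c d = map (\<lambda>k. if (\<forall>i<n. P i \<longrightarrow> bit k i) then d else c) [0..<2 ^ n]"

lemma ecube_nth: "k < 2 ^ n \<Longrightarrow> ecube n P c d ! k = (if (\<forall>i<n. P i \<longrightarrow> bit k i) then d else c)"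
  by (simp add: ecube_def)

lemma length_ecube[simp]: "length (ecube n P c d) = 2 ^ n"
  by (simp add: ecube_def)

lemma all_bits_iff: "(k::nat) < 2 ^ n \<Longrightarrow> (\<forall>i<n. bit k i) \<longleftrightarrow> k = mk n (\<lambda>_. True)"
  by (metis mk_bit mk_eq_iff)

lemma Delta_const:
  assumes "0 < n" "(a, a) \<in> \<alpha> 0"
  shows "replicate (2 ^ n) a \<in> Delta A F n \<alpha>"
proof -
  have "cvec n 0 a a = replicate (2 ^ n) a" by (simp add: cvec_def map_replicate_const)
  then show ?thesis using Delta.gen[of 0 n a a \<alpha> A F] assms by simp
qed

lemma concat_nth_block:
  "\<forall>xs\<in>set xss. length xs = K \<Longrightarrow> i < length xss \<Longrightarrow> l < K \<Longrightarrow> concat xss ! (i * K + l) = xss ! i ! l"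
proof (induction xss arbitrary: i)
  case Nil then show ?case by simp
next
  case (Cons x xss)
  show ?case
  proof (cases i)
    case 0 then show ?thesis using Cons by (simp add: nth_append)
  next
    case (Suc i')
    have "concat (x # xss) ! (i * K + l) = concat xss ! (i' * K + l)"
      using Cons.prems Suc by (simp add: nth_append add.assoc)
    then show ?thesis using Cons Suc by simp
  qed
qed

lemma take_app_last: "length bs = Suc l \<Longrightarrow> take l bs @ [bs ! l] = bs"
  by (metis lessI take_Suc_conv_app_nth take_all order_refl)

lemma centr_noneq:
  assumes alg: "is_algebra A F" and eqv: "equiv A \<gamma>" and C: "centralizes A F \<beta>s \<gamma>"
    and bA: "\<forall>i<length \<beta>s. \<beta>s ! i \<subseteq> A \<times> A"
    and la: "length as = length \<beta>s" and lb: "length bs = length \<beta>s"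
    and li: "\<forall>i<length \<beta>s. length (as ! i) = length (bs ! i) \<and>
               list_all2 (\<lambda>x y. (x, y) \<in> \<beta>s ! i) (as ! i) (bs ! i)"
    and t: "t \<in> termops F (length (concat as))"
    and H: "\<forall>e. (\<exists>i < length \<beta>s - 1. \<not> e i) \<longrightarrow>
            (t (concat (pick (length \<beta>s - 1) e as bs @ [as ! (length \<beta>s - 1)])),
             t (concat (pick (length \<beta>s - 1) e as bs @ [bs ! (length \<beta>s - 1)]))) \<in> \<gamma>"
  shows "(t (concat (take (length \<beta>s - 1) bs @ [as ! (length \<beta>s - 1)])), t (concat bs)) \<in> \<gamma>"
proof (cases "\<forall>i<length \<beta>s. as ! i \<noteq> bs ! i")
  case True
  then show ?thesis using C la lb li t H unfolding centralizes_def by blast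
next
  case False
  then obtain i where i: "i < length \<beta>s" "as ! i = bs ! i" by blast
  define l where "l = length \<beta>s - 1"
  have Ll: "length \<beta>s = Suc l" using i by (simp add: l_def)
  have tb: "take l bs @ [bs ! l] = bs" using lb Ll take_app_last by simp
  show ?thesis
  proof (cases "i < l")
    case True
    define e where "e = (\<lambda>j. j \<noteq> i)"
    have "pick l e as bs = take l bs"
      using lb Ll i by (intro nth_equalityI) (auto simp: pick_def e_def)
    moreover have "\<exists>j < l. \<not> e j" using True by (auto simp: e_def)
    moreover have H': "\<forall>e. (\<exists>i<l. \<not> e i) \<longrightarrow> (t (concat (pick l e as bs @ [as ! l])),
        t (concat (pick l e as bs @ [bs ! l]))) \<in> \<gamma>" using H by (simp add: l_def)
    ultimately have "(t (concat (take l bs @ [as ! l])), t (concat bs)) \<in> \<gamma>"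
      using tb by metis
    then show ?thesis by (simp add: l_def)
  next
    case False
    then have "i = l" using i Ll by simp
    then have eq: "take l bs @ [as ! l] = bs" using tb i by simp
    have "map length bs = map length as" using la lb li by (intro nth_equalityI) auto
    then have len: "length (concat bs) = length (concat as)" by (simp add: length_concat)
    have "set (concat bs) \<subseteq> A"
    proof
      fix y assume "y \<in> set (concat bs)"
      then obtain xs where xs: "xs \<in> set bs" "y \<in> set xs" by auto
      then obtain j where j: "j < length bs" "xs = bs ! j" by (metis in_set_conv_nth)
      then obtain p where p: "p < length xs" "y = xs ! p" using xs by (metis in_set_conv_nth)
      have "(as ! j ! p, bs ! j ! p) \<in> \<beta>s ! j" using li j p lb by (auto dest: list_all2_nthD2)
      then show "y \<in> A" using bA j p lb by auto
    qed
    then have "t (concat bs) \<in> A" using termops_A[OF alg t] len by simp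
    then have "(t (concat bs), t (concat bs)) \<in> \<gamma>" using eqv unfolding equiv_def refl_on_def by blast
    then have "(t (concat (take l bs @ [as ! l])), t (concat bs)) \<in> \<gamma>" using eq by simp
    then show ?thesis by (simp add: l_def)
  qed
qed

locale mset =
  fixes A :: "'a set" and F :: "'a ops" and q :: "'a list \<Rightarrow> 'a" and m :: nat
    and \<beta> :: "nat \<Rightarrow> ('a \<times> 'a) set"
  assumes alg: "is_algebra A F" and mal: "is_malcev A F q" and m1: "1 \<le> m"
    and cg: "\<forall>i<m. congruence A F (\<beta> i)"
begin

abbreviation "D \<equiv> Delta A F m \<beta>"

lemma qt: "is_term_op A F 3 q" using mal by (simp add: is_malcev_def)
lemma q1: "x \<in> A \<Longrightarrow> y \<in> A \<Longrightarrow> q [x, x, y] = y" using mal by (simp add: is_malcev_def)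
lemma q2: "x \<in> A \<Longrightarrow> y \<in> A \<Longrightarrow> q [y, x, x] = y" using mal by (simp add: is_malcev_def)
lemma al: "\<forall>i<m. \<beta> i \<subseteq> A \<times> A" using cg cong_sub by fast
lemma brefl: "i < m \<Longrightarrow> a \<in> A \<Longrightarrow> (a, a) \<in> \<beta> i"
  using cg unfolding congruence_def equiv_def refl_on_def by blast

lemma Dlen: "v \<in> D \<Longrightarrow> length v = 2 ^ m" by (rule Delta_len)
lemma DA: "v \<in> D \<Longrightarrow> k < 2 ^ m \<Longrightarrow> v ! k \<in> A"
  using Delta_A[OF alg al] Dlen by (metis nth_mem subsetD)

definition mapq :: "'a list \<Rightarrow> 'a list \<Rightarrow> 'a list \<Rightarrow> 'a list" where
  "mapq u v w = map (\<lambda>j. q [u ! j, v ! j, w ! j]) [0..<2 ^ m]"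

lemma mapq_D: "u \<in> D \<Longrightarrow> v \<in> D \<Longrightarrow> w \<in> D \<Longrightarrow> mapq u v w \<in> D"
  unfolding mapq_def by (rule Delta_q[OF alg al qt])

lemma mapq_nth: "j < 2 ^ m \<Longrightarrow> mapq u v w ! j = q [u ! j, v ! j, w ! j]"
  by (simp add: mapq_def)

lemma length_mapq[simp]: "length (mapq u v w) = 2 ^ m" by (simp add: mapq_def)

definition cst :: "'a \<Rightarrow> 'a list" where "cst a = replicate (2 ^ m) a"

lemma cst_D: "a \<in> A \<Longrightarrow> cst a \<in> D"
  unfolding cst_def using m1 brefl by (intro Delta_const) auto

definition tp where "tp = mk m (\<lambda>_. True)"
lemma tp_less: "tp < 2 ^ m" by (simp add: tp_def mk_less)

abbreviation E where "E c d \<equiv> ecube m (\<lambda>_. True) c d"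

lemma E_nth: "k < 2 ^ m \<Longrightarrow> E c d ! k = (if k = tp then d else c)"
  by (simp add: ecube_nth all_bits_iff tp_def)

lemma zero_ne_tp: "0 \<noteq> tp"
proof -
  have "bit tp 0" using m1 by (simp add: tp_def bit_mk)
  then show ?thesis by (metis bit_0 even_zero)
qed

definition Rm where "Rm = {(c, d). E c d \<in> D}"

lemma Rm_A: "(c, d) \<in> Rm \<Longrightarrow> c \<in> A \<and> d \<in> A"
proof -
  assume "(c, d) \<in> Rm"
  then have e: "E c d \<in> D" by (simp add: Rm_def)
  have "E c d ! 0 \<in> A" "E c d ! tp \<in> A" using DA[OF e] tp_less by auto
  moreover have "E c d ! 0 = c" using zero_ne_tp by (simp add: E_nth)
  moreover have "E c d ! tp = d" using tp_less by (simp add: E_nth)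
  ultimately show ?thesis by simp
qed

lemma E_cst: "E c c = cst c"
  by (intro nth_equalityI) (auto simp: E_nth cst_def)

lemma Rm_refl: "c \<in> A \<Longrightarrow> (c, c) \<in> Rm"
  using cst_D E_cst by (simp add: Rm_def)

lemma Rm_sym: "(c, d) \<in> Rm \<Longrightarrow> (d, c) \<in> Rm"
proof -
  assume h: "(c, d) \<in> Rm"
  then have A: "c \<in> A" "d \<in> A" using Rm_A by auto
  have "mapq (cst c) (E c d) (cst d) \<in> D"
    using h A by (intro mapq_D cst_D) (auto simp: Rm_def)
  moreover have "mapq (cst c) (E c d) (cst d) = E d c"
    by (intro nth_equalityI) (auto simp: mapq_nth E_nth cst_def q1 q2 A)
  ultimately show ?thesis by (simp add: Rm_def)
qed

lemma Rm_trans: "(c, d) \<in> Rm \<Longrightarrow> (d, e) \<in> Rm \<Longrightarrow> (c, e) \<in> Rm"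
proof -
  assume h: "(c, d) \<in> Rm" "(d, e) \<in> Rm"
  then have A: "c \<in> A" "d \<in> A" "e \<in> A" using Rm_A by auto
  have "mapq (E c d) (cst d) (E d e) \<in> D"
    using h A by (intro mapq_D cst_D) (auto simp: Rm_def)
  moreover have "mapq (E c d) (cst d) (E d e) = E c e"
    by (intro nth_equalityI) (auto simp: mapq_nth E_nth cst_def q1 q2 A)
  ultimately show ?thesis by (simp add: Rm_def)
qed

lemma Rm_compat:
  assumes p: "(n, f) \<in> F" and l: "length xs = n" "length ys = n"
    and r: "list_all2 (\<lambda>x y. (x, y) \<in> Rm) xs ys"
  shows "(f xs, f ys) \<in> Rm"
proof -
  define vs where "vs = map (\<lambda>l. E (xs ! l) (ys ! l)) [0..<n]"
  have "map (\<lambda>j. f (map (\<lambda>v. v ! j) vs)) [0..<2 ^ m] \<in> D"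
    using p r l by (intro Delta.op[of n f]) (auto simp: vs_def Rm_def list_all2_conv_all_nth)
  moreover have "map (\<lambda>j. f (map (\<lambda>v. v ! j) vs)) [0..<2 ^ m] = E (f xs) (f ys)"
  proof (intro nth_equalityI)
    fix j assume "j < length (map (\<lambda>j. f (map (\<lambda>v. v ! j) vs)) [0..<2 ^ m])"
    then have j: "j < 2 ^ m" by simp
    have "map (\<lambda>v. v ! j) vs = (if j = tp then ys else xs)"
      using l j by (intro nth_equalityI) (auto simp: vs_def E_nth)
    then show "map (\<lambda>j. f (map (\<lambda>v. v ! j) vs)) [0..<2 ^ m] ! j = E (f xs) (f ys) ! j"
      using j by (simp add: E_nth)
  qed simp
  ultimately show ?thesis by (simp add: Rm_def)
qed

lemma Rm_cong: "congruence A F Rm"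
  unfolding congruence_def
proof (intro conjI)
  show "equiv A Rm"
    by (intro equivI refl_onI symI transI) (auto dest: Rm_A intro: Rm_refl Rm_sym Rm_trans)
  show "\<forall>(n, f)\<in>F. \<forall>xs ys. length xs = n \<and> length ys = n \<and> list_all2 (\<lambda>x y. (x, y) \<in> Rm) xs ys \<longrightarrow>
          (f xs, f ys) \<in> Rm"
    using Rm_compat by blast
qed

lemma Rm_q:
  assumes "(x1, y1) \<in> Rm" "(x2, y2) \<in> Rm" "(x3, y3) \<in> Rm"
  shows "(q [x1, x2, x3], q [y1, y2, y3]) \<in> Rm"
  using cong_q[OF Rm_cong qt] assms by blast

definition lo where "lo k = mk m (\<lambda>i. i \<noteq> m - 1 \<and> bit k i)"
definition hi where "hi k = mk m (\<lambda>i. i = m - 1 \<or> bit k i)"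
definition lt where "lt = mk m (\<lambda>i. i \<noteq> m - 1)"

lemma lo_less: "lo k < 2 ^ m" by (simp add: lo_def mk_less)
lemma hi_less: "hi k < 2 ^ m" by (simp add: hi_def mk_less)
lemma lt_less: "lt < 2 ^ m" by (simp add: lt_def mk_less)

lemma lo_id: "k < 2 ^ m \<Longrightarrow> \<not> bit k (m - 1) \<Longrightarrow> lo k = k"
  unfolding lo_def by (subst mk_bit[symmetric], assumption) (auto simp: mk_eq_iff)

lemma lo_up: "\<not> bit (lo k) (m - 1)" by (simp add: lo_def bit_mk)

lemma hi_lo: "k < 2 ^ m \<Longrightarrow> bit k (m - 1) \<Longrightarrow> hi (lo k) = k"
  unfolding lo_def hi_def by (subst mk_bit[symmetric], assumption) (auto simp: mk_eq_iff bit_mk)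

lemma lo_lt: "k < 2 ^ m \<Longrightarrow> bit k (m - 1) \<Longrightarrow> k \<noteq> tp \<Longrightarrow> lo k \<noteq> lt"
proof
  assume k: "k < 2 ^ m" "bit k (m - 1)" "k \<noteq> tp" and e: "lo k = lt"
  have "\<forall>i<m. bit k i"
  proof (intro allI impI)
    fix i assume i: "i < m"
    show "bit k i"
    proof (cases "i = m - 1")
      case True then show ?thesis using k by simp
    next
      case False
      have "bit (lo k) i = bit lt i" using e by simp
      then show ?thesis using False i by (simp add: lo_def lt_def bit_mk)
    qed
  qed
  then show False using k all_bits_iff tp_def by auto
qed

lemma lo_tp: "lo tp = lt"
  unfolding lo_def lt_def tp_def by (auto simp: mk_eq_iff bit_mk)

lemma lo_D: assumes u: "u \<in> D" shows "map (\<lambda>k. u ! lo k) [0..<2 ^ m] \<in> D"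
proof (rule Delta_reindex[OF _ _ u])
  show "\<forall>k<2 ^ m. lo k < 2 ^ m" by (simp add: lo_less)
  show "\<forall>i<m. \<forall>a b. (a, b) \<in> \<beta> i \<longrightarrow> map (\<lambda>k. cvec m i a b ! lo k) [0..<2 ^ m] \<in> D"
  proof (intro allI impI)
    fix i a b assume i: "i < m" and ab: "(a, b) \<in> \<beta> i"
    then have aA: "a \<in> A" using al by auto
    show "map (\<lambda>k. cvec m i a b ! lo k) [0..<2 ^ m] \<in> D"
    proof (rule reindex_gen)
      show "\<forall>k<2 ^ m. lo k < 2 ^ m" by (simp add: lo_less)
      show "(\<exists>j<m. (\<forall>k<2 ^ m. bit (lo k) i = bit k j) \<and> (a, b) \<in> \<beta> j) \<or>
        (\<forall>k<2 ^ m. \<not> bit (lo k) i) \<and> (a, a) \<in> \<beta> 0 \<and> 0 < m \<or>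
        (\<forall>k<2 ^ m. bit (lo k) i) \<and> (b, b) \<in> \<beta> 0 \<and> 0 < m"
      proof (cases "i = m - 1")
        case True
        then show ?thesis using brefl[of 0 a] aA m1 by (auto simp: lo_def bit_mk)
      next
        case False
        then show ?thesis using i ab by (auto simp: lo_def bit_mk)
      qed
    qed
  qed
qed

definition fill where "fill N k = mk m (\<lambda>i. bit k i \<or> \<not> bit N i)"

lemma fill_D: assumes u: "u \<in> D" shows "map (\<lambda>k. u ! fill N k) [0..<2 ^ m] \<in> D"
proof (rule Delta_reindex[OF _ _ u])
  show "\<forall>k<2 ^ m. fill N k < 2 ^ m" by (simp add: fill_def mk_less)
  show "\<forall>i<m. \<forall>a b. (a, b) \<in> \<beta> i \<longrightarrow> map (\<lambda>k. cvec m i a b ! fill N k) [0..<2 ^ m] \<in> D"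
  proof (intro allI impI)
    fix i a b assume i: "i < m" and ab: "(a, b) \<in> \<beta> i"
    then have bA: "b \<in> A" using al by auto
    show "map (\<lambda>k. cvec m i a b ! fill N k) [0..<2 ^ m] \<in> D"
    proof (rule reindex_gen)
      show "\<forall>k<2 ^ m. fill N k < 2 ^ m" by (simp add: fill_def mk_less)
      show "(\<exists>j<m. (\<forall>k<2 ^ m. bit (fill N k) i = bit k j) \<and> (a, b) \<in> \<beta> j) \<or>
        (\<forall>k<2 ^ m. \<not> bit (fill N k) i) \<and> (a, a) \<in> \<beta> 0 \<and> 0 < m \<or>
        (\<forall>k<2 ^ m. bit (fill N k) i) \<and> (b, b) \<in> \<beta> 0 \<and> 0 < m"
      proof (cases "bit N i")
        case False
        then show ?thesis using brefl[of 0 b] bA m1 i by (auto simp: fill_def bit_mk)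
      next
        case True
        then show ?thesis using i ab by (auto simp: fill_def bit_mk)
      qed
    qed
  qed
qed

lemma fill_tp: "k < 2 ^ m \<Longrightarrow> fill N k = tp \<longleftrightarrow> (\<forall>i<m. bit N i \<longrightarrow> bit k i)"
  unfolding fill_def tp_def by (auto simp: mk_eq_iff)

lemma P_R:
  assumes u: "u \<in> D"
    and H: "\<forall>k<2 ^ m. \<not> bit k (m - 1) \<and> k \<noteq> lt \<longrightarrow> (u ! k, u ! hi k) \<in> Rm"
  shows "(u ! lt, u ! tp) \<in> Rm"
proof -
  define c where "c = u ! lt"
  define d where "d = u ! tp"
  have cA: "c \<in> A" using DA[OF u lt_less] by (simp add: c_def)
  have dA: "d \<in> A" using DA[OF u tp_less] by (simp add: d_def)
  have uA: "\<And>k. k < 2 ^ m \<Longrightarrow> u ! k \<in> A" using DA[OF u] .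
  define u0 where "u0 = map (\<lambda>k. u ! lo k) [0..<2 ^ m]"
  have u0D: "u0 \<in> D" using lo_D[OF u] by (simp add: u0_def)
  define z0 where "z0 = mapq u u0 (cst c)"
  have z0D: "z0 \<in> D" unfolding z0_def using u u0D cst_D[OF cA] by (rule mapq_D)
  have z0_nth: "z0 ! k = q [u ! k, u ! lo k, c]" if "k < 2 ^ m" for k
    using that by (simp add: z0_def mapq_nth u0_def cst_def)
  define Inv where "Inv N z \<longleftrightarrow> z \<in> D \<and> (\<forall>k<2 ^ m. \<not> bit k (m - 1) \<longrightarrow> z ! k = c)
      \<and> (\<forall>k<2 ^ m. bit k (m - 1) \<and> k \<noteq> tp \<longrightarrow> (z ! k, c) \<in> Rm)
      \<and> (\<forall>k<2 ^ m. k < N \<and> bit k (m - 1) \<and> k \<noteq> tp \<longrightarrow> z ! k = c)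
      \<and> (z ! tp, d) \<in> Rm" for N z
  have inv0: "Inv 0 z0"
    unfolding Inv_def
  proof (intro conjI allI impI)
    show "z0 \<in> D" by (rule z0D)
  next
    fix k :: nat assume k: "k < 2 ^ m" "\<not> bit k (m - 1)"
    then show "z0 ! k = c" using z0_nth lo_id q1 uA cA by simp
  next
    fix k :: nat assume k: "k < 2 ^ m" "bit k (m - 1) \<and> k \<noteq> tp"
    have l: "lo k < 2 ^ m" "\<not> bit (lo k) (m - 1)" "lo k \<noteq> lt" using lo_less lo_up lo_lt k by auto
    have "(u ! lo k, u ! hi (lo k)) \<in> Rm" using H l by blast
    then have r: "(u ! k, u ! lo k) \<in> Rm" using hi_lo k by (auto intro: Rm_sym)
    have "(q [u ! k, u ! lo k, c], q [u ! lo k, u ! lo k, c]) \<in> Rm"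
      using r Rm_refl[of "u ! lo k"] Rm_refl[OF cA] uA l by (intro Rm_q) auto
    then show "(z0 ! k, c) \<in> Rm" using z0_nth k q1 uA l cA by simp
  next
    fix k :: nat assume "k < 2 ^ m" "k < 0 \<and> bit k (m - 1) \<and> k \<noteq> tp"
    then show "z0 ! k = c" by simp
  next
    show "(z0 ! tp, d) \<in> Rm" using z0_nth tp_less lo_tp q2 dA cA Rm_refl
      by (simp add: c_def d_def)
  qed
  have step: "\<exists>z. Inv (Suc N) z" if "Inv N z" for N z
  proof (cases "N < 2 ^ m \<and> bit N (m - 1) \<and> N \<noteq> tp")
    case False
    then have "Inv (Suc N) z" using that unfolding Inv_def
      by (metis less_Suc_eq)
    then show ?thesis by blast
  next
    case True
    have zD: "z \<in> D" and zc: "\<forall>k<2 ^ m. \<not> bit k (m - 1) \<longrightarrow> z ! k = c"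
      and zr: "\<forall>k<2 ^ m. bit k (m - 1) \<and> k \<noteq> tp \<longrightarrow> (z ! k, c) \<in> Rm"
      and zN: "\<forall>k<2 ^ m. k < N \<and> bit k (m - 1) \<and> k \<noteq> tp \<longrightarrow> z ! k = c"
      and zt: "(z ! tp, d) \<in> Rm" using that unfolding Inv_def by auto
    have zA: "\<And>k. k < 2 ^ m \<Longrightarrow> z ! k \<in> A" using DA[OF zD] .
    define x where "x = z ! N"
    have xc: "(x, c) \<in> Rm" using zr True by (simp add: x_def)
    have xA: "x \<in> A" using zA True by (simp add: x_def)
    define fe where "fe = map (\<lambda>k. E x c ! fill N k) [0..<2 ^ m]"
    have feD: "fe \<in> D" unfolding fe_def using xc by (intro fill_D) (simp add: Rm_def)
    have fe_nth: "fe ! k = (if (\<forall>i<m. bit N i \<longrightarrow> bit k i) then c else x)" if "k < 2 ^ m" for k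
      using that fill_tp[OF that, of N] by (simp add: fe_def E_nth fill_def mk_less)
    define z' where "z' = mapq z (cst x) fe"
    have z'D: "z' \<in> D" unfolding z'_def using zD cst_D[OF xA] feD by (rule mapq_D)
    have z'_nth: "z' ! k = (if (\<forall>i<m. bit N i \<longrightarrow> bit k i) then q [z ! k, x, c] else z ! k)"
      if "k < 2 ^ m" for k
      using that fe_nth[OF that] q2[OF xA zA[OF that]] by (auto simp: z'_def mapq_nth cst_def)
    have "Inv (Suc N) z'"
      unfolding Inv_def
    proof (intro conjI allI impI)
      show "z' \<in> D" by (rule z'D)
    next
      fix k :: nat assume k: "k < 2 ^ m" "\<not> bit k (m - 1)"
      then show "z' ! k = c" using z'_nth[OF k(1)] zc True m1 by auto
    next
      fix k :: nat assume k: "k < 2 ^ m" "bit k (m - 1) \<and> k \<noteq> tp"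
      have "(q [z ! k, x, c], q [c, c, c]) \<in> Rm"
        using zr k xc Rm_refl[OF cA] by (intro Rm_q) auto
      then show "(z' ! k, c) \<in> Rm" using z'_nth[OF k(1)] zr k q1 cA by auto
    next
      fix k :: nat assume k: "k < 2 ^ m" "k < Suc N \<and> bit k (m - 1) \<and> k \<noteq> tp"
      show "z' ! k = c"
      proof (cases "k = N")
        case True
        then show ?thesis using z'_nth[OF k(1)] q1 xA cA by (simp add: x_def)
      next
        case False
        then have kN: "k < N" using k by simp
        have "\<not> (\<forall>i<m. bit N i \<longrightarrow> bit k i)"
          using bits_le[of N m k] True k kN by auto
        then show ?thesis using z'_nth[OF k(1)] zN k kN by auto
      qed
    next
      have "(q [z ! tp, x, c], q [z ! tp, c, c]) \<in> Rm"
        using xc Rm_refl[OF cA] Rm_refl[OF zA[OF tp_less]] by (intro Rm_q) auto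
      then have "(z' ! tp, z ! tp) \<in> Rm"
        using z'_nth[OF tp_less] q2[OF cA zA[OF tp_less]] all_bits_iff[OF tp_less] tp_def
        by auto
      then show "(z' ! tp, d) \<in> Rm" using zt Rm_trans by blast
    qed
    then show ?thesis by blast
  qed
  have "\<exists>z. Inv N z" for N
  proof (induction N)
    case 0 then show ?case using inv0 by blast
  next
    case (Suc N) then show ?case using step by blast
  qed
  then obtain z where "Inv (2 ^ m) z" by blast
  then have zD: "z \<in> D" and zc: "\<forall>k<2 ^ m. k \<noteq> tp \<longrightarrow> z ! k = c" and zt: "(z ! tp, d) \<in> Rm"
    unfolding Inv_def by auto
  have "z = E c (z ! tp)"
    using zc Dlen[OF zD] by (intro nth_equalityI) (auto simp: E_nth)
  then have "(c, z ! tp) \<in> Rm" using zD by (simp add: Rm_def)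
  then have "(c, d) \<in> Rm" using zt Rm_trans by blast
  then show ?thesis by (simp add: c_def d_def)
qed

definition sel :: "(nat \<Rightarrow> bool) \<Rightarrow> 'a list list \<Rightarrow> 'a list list \<Rightarrow> 'a list list" where
  "sel P as bs = map (\<lambda>i. if P i then bs ! i else as ! i) [0..<m]"

lemma sel_cong: "\<forall>i<m. P i = Q i \<Longrightarrow> sel P as bs = sel Q as bs"
  by (auto simp: sel_def)

lemma pick_sel_a: "pick (m - 1) e as bs @ [as ! (m - 1)] = sel (\<lambda>i. if i = m - 1 then False else e i) as bs"
  using m1 by (intro nth_equalityI) (auto simp: sel_def pick_def nth_append)

lemma pick_sel_b: "pick (m - 1) e as bs @ [bs ! (m - 1)] = sel (\<lambda>i. if i = m - 1 then True else e i) as bs"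
  using m1 by (intro nth_equalityI) (auto simp: sel_def pick_def nth_append)

lemma take_sel: "length bs = m \<Longrightarrow> take (m - 1) bs @ [as ! (m - 1)] = sel (\<lambda>i. i \<noteq> m - 1) as bs"
  using m1 by (intro nth_equalityI) (auto simp: sel_def nth_append)

lemma all_sel: "length bs = m \<Longrightarrow> bs = sel (\<lambda>_. True) as bs"
  by (intro nth_equalityI) (auto simp: sel_def)

lemma bit_hi: "i < m \<Longrightarrow> bit (hi k) i = (i = m - 1 \<or> bit k i)"
  by (simp add: hi_def bit_mk)

lemma lt_iff: "k < 2 ^ m \<Longrightarrow> \<not> bit k (m - 1) \<Longrightarrow> k = lt \<longleftrightarrow> (\<forall>i<m - 1. bit k i)"
proof -
  assume k: "k < 2 ^ m" "\<not> bit k (m - 1)"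
  have "k = lt \<longleftrightarrow> mk m (bit k) = lt" using mk_bit[OF k(1)] by simp
  also have "\<dots> \<longleftrightarrow> (\<forall>i<m. bit k i = (i \<noteq> m - 1))" by (simp add: lt_def mk_eq_iff)
  also have "\<dots> \<longleftrightarrow> (\<forall>i<m - 1. bit k i)" using k m1
    by (metis Suc_pred' diff_le_self less_Suc_eq less_imp_diff_less less_le_trans not_less_eq zero_less_one)
  finally show ?thesis .
qed

lemma Rm_centr: "centralizes A F (map \<beta> [0..<m]) Rm"
  unfolding centralizes_def
proof (intro allI impI, elim conjE)
  fix as bs :: "'a list list" and t
  assume la: "length as = length (map \<beta> [0..<m])" and lb: "length bs = length (map \<beta> [0..<m])"
    and li: "\<forall>i<length (map \<beta> [0..<m]). length (as ! i) = length (bs ! i) \<and> as ! i \<noteq> bs ! i \<and>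
        list_all2 (\<lambda>x y. (x, y) \<in> map \<beta> [0..<m] ! i) (as ! i) (bs ! i)"
    and t: "t \<in> termops F (length (concat as))"
    and H: "\<forall>e. (\<exists>i<length (map \<beta> [0..<m]) - 1. \<not> e i) \<longrightarrow>
       (t (concat (pick (length (map \<beta> [0..<m]) - 1) e as bs @ [as ! (length (map \<beta> [0..<m]) - 1)])),
        t (concat (pick (length (map \<beta> [0..<m]) - 1) e as bs @ [bs ! (length (map \<beta> [0..<m]) - 1)]))) \<in> Rm"
  have la': "length as = m" and lb': "length bs = m" using la lb by auto
  have li': "\<And>i. i < m \<Longrightarrow> length (as ! i) = length (bs ! i) \<and> list_all2 (\<lambda>x y. (x, y) \<in> \<beta> i) (as ! i) (bs ! i)"
    using li by auto
  define vs where "vs = concat (map (\<lambda>i. map (\<lambda>l. cvec m i (as ! i ! l) (bs ! i ! l)) [0..<length (as ! i)]) [0..<m])"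
  have "map length as = map (\<lambda>i. length (as ! i)) [0..<m]" using la' by (intro nth_equalityI) auto
  then have lv: "length vs = length (concat as)" by (simp add: vs_def length_concat comp_def)
  have vD: "\<forall>v\<in>set vs. v \<in> D"
  proof
    fix v assume "v \<in> set vs"
    then obtain i l where il: "i < m" "l < length (as ! i)" "v = cvec m i (as ! i ! l) (bs ! i ! l)"
      by (auto simp: vs_def)
    have "(as ! i ! l, bs ! i ! l) \<in> \<beta> i" using li'[OF il(1)] il(2) by (auto dest: list_all2_nthD)
    then show "v \<in> D" using il Delta.gen by metis
  qed
  define u where "u = map (\<lambda>k. t (map (\<lambda>v. v ! k) vs)) [0..<2 ^ m]"
  have uD: "u \<in> D" unfolding u_def using t lv vD by (intro Delta_term) auto
  have u_nth: "u ! k = t (concat (sel (bit k) as bs))" if k: "k < 2 ^ m" for k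
  proof -
    have "map (\<lambda>v. v ! k) vs = concat (sel (bit k) as bs)"
      unfolding vs_def sel_def map_concat
      using k li' by (intro arg_cong[of _ _ concat] map_cong[OF refl] nth_equalityI) (auto simp: cvec_nth)
    then show ?thesis using k by (simp add: u_def)
  qed
  have u_sel: "u ! mk m P = t (concat (sel P as bs))" for P
    using u_nth[OF mk_less] sel_cong[of "bit (mk m P)" P] by (simp add: bit_mk)
  have "(u ! lt, u ! tp) \<in> Rm"
  proof (rule P_R[OF uD], intro allI impI, elim conjE)
    fix k assume k: "k < 2 ^ m" "\<not> bit k (m - 1)" "k \<noteq> lt"
    then have ex: "\<exists>i<m - 1. \<not> bit k i" using lt_iff by auto
    have e1: "u ! k = t (concat (pick (m - 1) (bit k) as bs @ [as ! (m - 1)]))"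
      unfolding pick_sel_a u_nth[OF k(1)] using k(2) by (intro arg_cong[of _ _ "\<lambda>x. t (concat x)"] sel_cong) auto
    have e2: "u ! hi k = t (concat (pick (m - 1) (bit k) as bs @ [bs ! (m - 1)]))"
    proof -
      have "u ! hi k = t (concat (sel (\<lambda>i. i = m - 1 \<or> bit k i) as bs))" unfolding hi_def u_sel ..
      also have "sel (\<lambda>i. i = m - 1 \<or> bit k i) as bs = sel (\<lambda>i. if i = m - 1 then True else bit k i) as bs"
        by (rule sel_cong) auto
      finally show ?thesis unfolding pick_sel_b .
    qed
    show "(u ! k, u ! hi k) \<in> Rm" using H ex e1 e2 by simp
  qed
  moreover have "u ! lt = t (concat (take (m - 1) bs @ [as ! (m - 1)]))"
    unfolding take_sel[OF lb'] lt_def u_sel ..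
  moreover have "u ! tp = t (concat bs)"
    using all_sel[OF lb', of as] unfolding tp_def u_sel by simp
  ultimately show "(t (concat (take (length (map \<beta> [0..<m]) - 1) bs @ [as ! (length (map \<beta> [0..<m]) - 1)])),
          t (concat bs)) \<in> Rm" by simp
qed

lemma mk_tp: "mk m P = tp \<longleftrightarrow> (\<forall>i<m. P i)"
  by (simp add: tp_def mk_eq_iff)

lemma lt_ne_tp: "lt \<noteq> tp"
  using m1 by (simp add: lt_def mk_tp)

lemma Rm_min:
  assumes gc: "congruence A F \<gamma>" and gz: "centralizes A F (map \<beta> [0..<m]) \<gamma>"
  shows "Rm \<subseteq> \<gamma>"
proof
  fix p assume "p \<in> Rm"
  then obtain c d where p: "p = (c, d)" and cd: "(c, d) \<in> Rm" by (cases p) auto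
  have cA: "c \<in> A" using Rm_A[OF cd] by simp
  have "E c d \<in> D" using cd by (simp add: Rm_def)
  from Delta_rep[OF this] obtain gs t where g: "gens_ok m \<beta> gs" "t \<in> termops F (length gs)"
    "E c d = EV m gs t" by blast
  define K where "K = length gs"
  define fs where "fs l = fst (gs ! l)" for l
  define av where "av l = fst (snd (gs ! l))" for l
  define bv where "bv l = snd (snd (gs ! l))" for l
  have gl: "fs l < m \<and> (av l, bv l) \<in> \<beta> (fs l)" if "l < K" for l
  proof -
    have "gs ! l \<in> set gs" using that by (simp add: K_def)
    moreover obtain i a b where "gs ! l = (i, a, b)" by (cases "gs ! l") auto
    ultimately show ?thesis using g(1) unfolding gens_ok_def fs_def av_def bv_def by fastforce
  qed
  define as where "as = replicate m (map av [0..<K])"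
  define bs where "bs = map (\<lambda>i. map (\<lambda>l. if fs l = i then bv l else av l) [0..<K]) [0..<m]"
  define t' where "t' = (\<lambda>xs. t (map (\<lambda>l. (\<lambda>xs. xs ! (fs l * K + l)) xs) [0..<K]))"
  have idx: "fs l * K + l < m * K" if "l < K" for l
  proof -
    have "fs l * K + l < fs l * K + K" using that by simp
    also have "\<dots> = Suc (fs l) * K" by simp
    also have "\<dots> \<le> m * K" using gl[OF that] by (intro mult_le_mono1) simp
    finally show ?thesis .
  qed
  have lca: "length (concat as) = m * K" by (simp add: as_def length_concat sum_list_replicate)
  have t't: "t' \<in> termops F (length (concat as))"
    unfolding t'_def lca using g(2) idx by (intro termops_subst) (auto simp: K_def intro: termops_proj)
  have ev_eq: "t' (concat (sel P as bs)) = E c d ! mk m P" for P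
  proof -
    have "map (\<lambda>l. concat (sel P as bs) ! (fs l * K + l)) [0..<K] = map (ev (mk m P)) gs"
    proof (intro nth_equalityI)
      fix l assume "l < length (map (\<lambda>l. concat (sel P as bs) ! (fs l * K + l)) [0..<K])"
      then have l: "l < K" by simp
      have "concat (sel P as bs) ! (fs l * K + l) = sel P as bs ! fs l ! l"
        using gl[OF l] l by (intro concat_nth_block) (auto simp: sel_def as_def bs_def)
      also have "\<dots> = (if P (fs l) then bv l else av l)"
        using gl[OF l] l by (simp add: sel_def as_def bs_def)
      also have "\<dots> = ev (mk m P) (gs ! l)"
        using gl[OF l] by (cases "gs ! l") (auto simp: ev_def bit_mk fs_def av_def bv_def)
      finally show "map (\<lambda>l. concat (sel P as bs) ! (fs l * K + l)) [0..<K] ! l = map (ev (mk m P)) gs ! l"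
        using l by (simp add: K_def)
    qed (simp add: K_def)
    then show ?thesis using g(3) mk_less[of m P] by (simp add: t'_def EV_def)
  qed
  have la: "length as = length (map \<beta> [0..<m])" and lb: "length bs = length (map \<beta> [0..<m])"
    by (auto simp: as_def bs_def)
  have li: "\<forall>i<length (map \<beta> [0..<m]). length (as ! i) = length (bs ! i) \<and>
     list_all2 (\<lambda>x y. (x, y) \<in> map \<beta> [0..<m] ! i) (as ! i) (bs ! i)"
  proof (intro allI impI conjI)
    fix i assume i: "i < length (map \<beta> [0..<m])"
    then show "length (as ! i) = length (bs ! i)" by (simp add: as_def bs_def)
    show "list_all2 (\<lambda>x y. (x, y) \<in> map \<beta> [0..<m] ! i) (as ! i) (bs ! i)"
    proof (unfold list_all2_conv_all_nth, intro conjI allI impI)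
      show "length (as ! i) = length (bs ! i)" using i by (simp add: as_def bs_def)
      fix l assume "l < length (as ! i)"
      then have l: "l < K" using i by (simp add: as_def)
      have "av l \<in> A" using gl[OF l] al by auto
      then show "(as ! i ! l, bs ! i ! l) \<in> map \<beta> [0..<m] ! i"
        using gl[OF l] i l brefl by (auto simp: as_def bs_def)
    qed
  qed
  have eqv: "equiv A \<gamma>" using gc by (simp add: congruence_def)
  have H: "\<forall>e. (\<exists>i < length (map \<beta> [0..<m]) - 1. \<not> e i) \<longrightarrow>
      (t' (concat (pick (length (map \<beta> [0..<m]) - 1) e as bs @ [as ! (length (map \<beta> [0..<m]) - 1)])),
       t' (concat (pick (length (map \<beta> [0..<m]) - 1) e as bs @ [bs ! (length (map \<beta> [0..<m]) - 1)]))) \<in> \<gamma>"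
  proof (intro allI impI)
    fix e assume "\<exists>i < length (map \<beta> [0..<m]) - 1. \<not> e i"
    then have "\<exists>i<m - 1. \<not> e i" by simp
    then obtain i where i: "i < m - 1" "\<not> e i" by blast
    have mlt: "m - 1 < m" using m1 by simp
    have n1: "mk m (\<lambda>j. if j = m - 1 then False else e j) \<noteq> tp"
      unfolding mk_tp
    proof
      assume h: "\<forall>j<m. if j = m - 1 then False else e j"
      show False using h[rule_format, OF mlt] by simp
    qed
    have im: "i < m" "i \<noteq> m - 1" using i by auto
    have n2: "mk m (\<lambda>j. if j = m - 1 then True else e j) \<noteq> tp"
      unfolding mk_tp
    proof
      assume h: "\<forall>j<m. if j = m - 1 then True else e j"
      have "if i = m - 1 then True else e i" using h im(1) by blast
      then have "e i" using im(2) by (simp split: if_splits)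
      then show False using i(2) by simp
    qed
    have "E c d ! mk m (\<lambda>j. if j = m - 1 then False else e j) = c"
      unfolding E_nth[OF mk_less] using n1 by (rule if_not_P)
    then have r1: "t' (concat (pick (m - 1) e as bs @ [as ! (m - 1)])) = c"
      unfolding pick_sel_a ev_eq .
    have "E c d ! mk m (\<lambda>j. if j = m - 1 then True else e j) = c"
      unfolding E_nth[OF mk_less] using n2 by (rule if_not_P)
    then have r2: "t' (concat (pick (m - 1) e as bs @ [bs ! (m - 1)])) = c"
      unfolding pick_sel_b ev_eq .
    note r1 r2
    moreover have "(c, c) \<in> \<gamma>" using eqv cA unfolding equiv_def refl_on_def by blast
    ultimately show "(t' (concat (pick (length (map \<beta> [0..<m]) - 1) e as bs @ [as ! (length (map \<beta> [0..<m]) - 1)])),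
       t' (concat (pick (length (map \<beta> [0..<m]) - 1) e as bs @ [bs ! (length (map \<beta> [0..<m]) - 1)]))) \<in> \<gamma>"
      by simp
  qed
  have bA: "\<forall>i<length (map \<beta> [0..<m]). map \<beta> [0..<m] ! i \<subseteq> A \<times> A" using al by auto
  have "(t' (concat (take (length (map \<beta> [0..<m]) - 1) bs @ [as ! (length (map \<beta> [0..<m]) - 1)])),
         t' (concat bs)) \<in> \<gamma>"
    by (rule centr_noneq[OF alg eqv gz bA la lb li t't H])
  moreover have "t' (concat (take (m - 1) bs @ [as ! (m - 1)])) = c"
  proof -
    have "E c d ! lt = c" unfolding E_nth[OF lt_less] using lt_ne_tp by (rule if_not_P)
    then show ?thesis unfolding take_sel[OF lb[simplified]] ev_eq lt_def .
  qed
  moreover have "t' (concat bs) = d"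
  proof -
    have "E c d ! tp = d" unfolding E_nth[OF tp_less] by simp
    then show ?thesis using all_sel[OF lb[simplified], of as] ev_eq[of "\<lambda>_. True"]
      unfolding tp_def by metis
  qed
  ultimately show "p \<in> \<gamma>" using p by simp
qed

theorem T1: "commutator A F (map \<beta> [0..<m]) = Rm"
proof
  show "commutator A F (map \<beta> [0..<m]) \<subseteq> Rm"
    unfolding commutator_def using Rm_cong Rm_centr by blast
  show "Rm \<subseteq> commutator A F (map \<beta> [0..<m])"
    unfolding commutator_def using Rm_min by blast
qed

end


lemma mk_false: "mk n (\<lambda>_. False) = 0"
  by (induction n) auto

lemma ex_bit: "(N::nat) < 2 ^ n \<Longrightarrow> N \<noteq> 0 \<Longrightarrow> \<exists>i<n. bit N i"
  using mk_bit[of N n] mk_eq_iff[of n "bit N" "\<lambda>_. False"] mk_false by auto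

lemma CI:
  assumes alg: "is_algebra A F" and mal: "is_malcev A F q" and n1: "1 \<le> n"
    and cg: "\<forall>i<n. congruence A F (\<alpha> i)"
    and I: "I \<subseteq> {..<n}" "I \<noteq> {}"
  shows "commutator_idx A F \<alpha> I = {(c, d). ecube n (\<lambda>i. i \<in> I) c d \<in> Delta A F n \<alpha>}"
proof -
  have fin: "finite I" using I finite_subset by blast
  define s where "s = sorted_list_of_set I"
  define m where "m = length s"
  have ss: "set s = I" "distinct s" using fin by (auto simp: s_def)
  have m1: "1 \<le> m" using ss I by (cases s) (auto simp: m_def)
  define \<beta> where "\<beta> j = \<alpha> (s ! j)" for j
  have sn: "j < m \<Longrightarrow> s ! j < n" for j using ss I by (auto simp: m_def)
  have sI: "j < m \<Longrightarrow> s ! j \<in> I" for j using ss by (auto simp: m_def)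
  have cgb: "\<forall>i<m. congruence A F (\<beta> i)" using cg sn by (auto simp: \<beta>_def)
  interpret M: mset A F q m \<beta> using alg mal m1 cgb by unfold_locales auto
  have ms: "map \<alpha> s = map \<beta> [0..<m]" by (intro nth_equalityI) (auto simp: \<beta>_def m_def)
  have alA: "\<forall>i<n. \<alpha> i \<subseteq> A \<times> A" using cg cong_sub by fast
  have arefl: "i < n \<Longrightarrow> a \<in> A \<Longrightarrow> (a, a) \<in> \<alpha> i" for i a
    using cg unfolding congruence_def equiv_def refl_on_def by blast
  have Iall: "(\<forall>i<n. i \<in> I \<longrightarrow> P i) \<longleftrightarrow> (\<forall>j<m. P (s ! j))" for P
  proof
    assume h: "\<forall>i<n. i \<in> I \<longrightarrow> P i"
    show "\<forall>j<m. P (s ! j)" using h sn sI by blast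
  next
    assume h: "\<forall>j<m. P (s ! j)"
    show "\<forall>i<n. i \<in> I \<longrightarrow> P i"
    proof (intro allI impI)
      fix i assume "i < n" "i \<in> I"
      then obtain j where "j < m" "s ! j = i" using ss(1) by (auto simp: m_def in_set_conv_nth)
      then show "P i" using h by blast
    qed
  qed
  have "commutator_idx A F \<alpha> I = M.Rm"
    unfolding commutator_idx_def s_def[symmetric] ms M.T1 ..
  also have "M.Rm = {(c, d). ecube n (\<lambda>i. i \<in> I) c d \<in> Delta A F n \<alpha>}"
  proof (intro set_eqI iffI)
    fix p assume "p \<in> M.Rm"
    then obtain c d where p: "p = (c, d)" and e: "M.E c d \<in> Delta A F m \<beta>" by (auto simp: M.Rm_def)
    define \<rho> :: "nat \<Rightarrow> nat" where "\<rho> k = mk m (\<lambda>j. bit k (s ! j))" for k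
    have "map (\<lambda>k. M.E c d ! \<rho> k) [0..<2 ^ n] \<in> Delta A F n \<alpha>"
    proof (rule Delta_reindex[OF _ _ e])
      show "\<forall>k<2 ^ n. \<rho> k < 2 ^ m" by (simp add: \<rho>_def mk_less)
      show "\<forall>i<m. \<forall>a b. (a, b) \<in> \<beta> i \<longrightarrow> map (\<lambda>k. cvec m i a b ! \<rho> k) [0..<2 ^ n] \<in> Delta A F n \<alpha>"
      proof (intro allI impI)
        fix j a b assume j: "j < m" and ab: "(a, b) \<in> \<beta> j"
        show "map (\<lambda>k. cvec m j a b ! \<rho> k) [0..<2 ^ n] \<in> Delta A F n \<alpha>"
          by (rule reindex_gen) (use j ab sn in \<open>auto simp: \<rho>_def mk_less bit_mk \<beta>_def\<close>)
      qed
    qed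
    moreover have "map (\<lambda>k. M.E c d ! \<rho> k) [0..<2 ^ n] = ecube n (\<lambda>i. i \<in> I) c d"
    proof (intro nth_equalityI)
      fix k assume "k < length (map (\<lambda>k. M.E c d ! \<rho> k) [0..<2 ^ n])"
      then have k: "k < 2 ^ n" by simp
      have "(\<forall>j<m. bit (\<rho> k) j) \<longleftrightarrow> (\<forall>i<n. i \<in> I \<longrightarrow> bit k i)"
        unfolding Iall by (simp add: \<rho>_def bit_mk)
      then show "map (\<lambda>k. M.E c d ! \<rho> k) [0..<2 ^ n] ! k = ecube n (\<lambda>i. i \<in> I) c d ! k"
        using k by (simp add: ecube_nth \<rho>_def mk_less)
    qed simp
    ultimately show "p \<in> {(c, d). ecube n (\<lambda>i. i \<in> I) c d \<in> Delta A F n \<alpha>}" using p by simp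
  next
    fix p assume "p \<in> {(c, d). ecube n (\<lambda>i. i \<in> I) c d \<in> Delta A F n \<alpha>}"
    then obtain c d where p: "p = (c, d)" and e: "ecube n (\<lambda>i. i \<in> I) c d \<in> Delta A F n \<alpha>" by auto
    define \<rho> :: "nat \<Rightarrow> nat" where "\<rho> k = mk n (\<lambda>i. \<exists>j<m. s ! j = i \<and> bit k j)" for k
    have uniq: "j < m \<Longrightarrow> j' < m \<Longrightarrow> s ! j = s ! j' \<Longrightarrow> j = j'" for j j'
      using ss(2) by (simp add: m_def nth_eq_iff_index_eq)
    have "map (\<lambda>k. ecube n (\<lambda>i. i \<in> I) c d ! \<rho> k) [0..<2 ^ m] \<in> Delta A F m \<beta>"
    proof (rule Delta_reindex[OF _ _ e])
      show "\<forall>k<2 ^ m. \<rho> k < 2 ^ n" by (simp add: \<rho>_def mk_less)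
      show "\<forall>i<n. \<forall>a b. (a, b) \<in> \<alpha> i \<longrightarrow> map (\<lambda>k. cvec n i a b ! \<rho> k) [0..<2 ^ m] \<in> Delta A F m \<beta>"
      proof (intro allI impI)
        fix i a b assume i: "i < n" and ab: "(a, b) \<in> \<alpha> i"
        have aA: "a \<in> A" using alA i ab by auto
        show "map (\<lambda>k. cvec n i a b ! \<rho> k) [0..<2 ^ m] \<in> Delta A F m \<beta>"
        proof (rule reindex_gen)
          show "\<forall>k<2 ^ m. \<rho> k < 2 ^ n" by (simp add: \<rho>_def mk_less)
          show "(\<exists>j<m. (\<forall>k<2 ^ m. bit (\<rho> k) i = bit k j) \<and> (a, b) \<in> \<beta> j) \<or>
            (\<forall>k<2 ^ m. \<not> bit (\<rho> k) i) \<and> (a, a) \<in> \<beta> 0 \<and> 0 < m \<or>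
            (\<forall>k<2 ^ m. bit (\<rho> k) i) \<and> (b, b) \<in> \<beta> 0 \<and> 0 < m"
          proof (cases "\<exists>j<m. s ! j = i")
            case True
            then obtain j where j: "j < m" "s ! j = i" by blast
            have "\<forall>k<2 ^ m. bit (\<rho> k) i = bit k j"
              using j i uniq by (auto simp: \<rho>_def bit_mk)
            then show ?thesis using j ab by (auto simp: \<beta>_def)
          next
            case False
            have "(a, a) \<in> \<beta> 0" unfolding \<beta>_def using arefl[OF sn aA] m1 by simp
            then show ?thesis using False m1 by (auto simp: \<rho>_def bit_mk)
          qed
        qed
      qed
    qed
    moreover have "map (\<lambda>k. ecube n (\<lambda>i. i \<in> I) c d ! \<rho> k) [0..<2 ^ m] = M.E c d"
    proof (intro nth_equalityI)
      fix k assume "k < length (map (\<lambda>k. ecube n (\<lambda>i. i \<in> I) c d ! \<rho> k) [0..<2 ^ m])"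
      then have k: "k < 2 ^ m" by simp
      have "(\<forall>i<n. i \<in> I \<longrightarrow> bit (\<rho> k) i) \<longleftrightarrow> (\<forall>j<m. bit k j)"
        unfolding Iall using sn uniq by (auto simp: \<rho>_def bit_mk) (metis uniq)
      then show "map (\<lambda>k. ecube n (\<lambda>i. i \<in> I) c d ! \<rho> k) [0..<2 ^ m] ! k = M.E c d ! k"
        using k by (simp add: ecube_nth \<rho>_def mk_less)
    qed simp
    ultimately show "p \<in> M.Rm" using p by (simp add: M.Rm_def)
  qed
  finally show ?thesis .
qed


lemma L4:
  assumes algF: "is_algebra A F" and malF: "is_malcev A F q"
    and algG: "is_algebra A G" and malG: "is_malcev A G q" and n1: "1 \<le> n"
    and cgF: "\<forall>i<n. congruence A F (\<alpha> i)" and cgG: "\<forall>i<n. congruence A G (\<alpha> i)"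
    and EQ: "\<forall>I c d. I \<subseteq> {..<n} \<and> I \<noteq> {} \<longrightarrow>
       (ecube n (\<lambda>i. i \<in> I) c d \<in> Delta A F n \<alpha> \<longleftrightarrow> ecube n (\<lambda>i. i \<in> I) c d \<in> Delta A G n \<alpha>)"
    and u: "u \<in> Delta A F n \<alpha>"
  shows "u \<in> Delta A G n \<alpha>"
proof -
  have alA: "\<forall>i<n. \<alpha> i \<subseteq> A \<times> A" using cgF cong_sub by fast
  have arefl: "i < n \<Longrightarrow> a \<in> A \<Longrightarrow> (a, a) \<in> \<alpha> i" for i a
    using cgF unfolding congruence_def equiv_def refl_on_def by blast
  have qtF: "is_term_op A F 3 q" and qtG: "is_term_op A G 3 q" using malF malG by (auto simp: is_malcev_def)
  have q1: "x \<in> A \<Longrightarrow> y \<in> A \<Longrightarrow> q [x, x, y] = y" for x y using malF by (simp add: is_malcev_def)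
  have q2: "x \<in> A \<Longrightarrow> y \<in> A \<Longrightarrow> q [y, x, x] = y" for x y using malF by (simp add: is_malcev_def)
  have DAF: "v \<in> Delta A F n \<alpha> \<Longrightarrow> k < 2 ^ n \<Longrightarrow> v ! k \<in> A" for v k
    using Delta_A[OF algF alA] Delta_len by (metis nth_mem subsetD)
  have cst: "a \<in> A \<Longrightarrow> replicate (2 ^ n) a \<in> Delta A X n \<alpha>" for a X
    using n1 arefl by (intro Delta_const) auto
  have uA: "k < 2 ^ n \<Longrightarrow> u ! k \<in> A" for k using DAF[OF u] .
  have lu: "length u = 2 ^ n" using Delta_len[OF u] .
  define Inv where "Inv N w \<longleftrightarrow> w \<in> Delta A F n \<alpha> \<and> w \<in> Delta A G n \<alpha> \<and> (\<forall>k<N. k < 2 ^ n \<longrightarrow> w ! k = u ! k)"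
    for N w
  have inv0: "Inv 0 (replicate (2 ^ n) (u ! 0))"
    unfolding Inv_def using cst uA by simp
  have step: "\<exists>w'. Inv (Suc N) w'" if inv: "Inv N w" for N w
  proof (cases "N = 0")
    case True
    have "Inv (Suc N) (replicate (2 ^ n) (u ! 0))"
      unfolding Inv_def using cst uA True by auto
    then show ?thesis by blast
  next
    case N0: False
    show ?thesis
    proof (cases "N < 2 ^ n")
      case False
      then have "Inv (Suc N) w" using inv unfolding Inv_def by (auto simp: less_Suc_eq)
      then show ?thesis by blast
    next
      case True
      have wF: "w \<in> Delta A F n \<alpha>" and wG: "w \<in> Delta A G n \<alpha>"
        and wu: "\<forall>k<N. k < 2 ^ n \<longrightarrow> w ! k = u ! k" using inv unfolding Inv_def by auto
      have wA: "k < 2 ^ n \<Longrightarrow> w ! k \<in> A" for k using DAF[OF wF] .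
      define c where "c = w ! N"
      define d where "d = u ! N"
      have cA: "c \<in> A" using wA True by (simp add: c_def)
      define I where "I = {i. i < n \<and> bit N i}"
      have I: "I \<subseteq> {..<n}" "I \<noteq> {}" using ex_bit[OF True N0] by (auto simp: I_def)
      define \<rho> :: "nat \<Rightarrow> nat" where "\<rho> k = mk n (\<lambda>i. bit k i \<and> bit N i)" for k
      have \<rho>_less: "\<rho> k < 2 ^ n" for k by (simp add: \<rho>_def mk_less)
      have col: "map (\<lambda>k. v ! \<rho> k) [0..<2 ^ n] \<in> Delta A F n \<alpha>" if v: "v \<in> Delta A F n \<alpha>" for v
      proof (rule Delta_reindex[OF _ _ v])
        show "\<forall>k<2 ^ n. \<rho> k < 2 ^ n" by (simp add: \<rho>_less)
        show "\<forall>i<n. \<forall>a b. (a, b) \<in> \<alpha> i \<longrightarrow> map (\<lambda>k. cvec n i a b ! \<rho> k) [0..<2 ^ n] \<in> Delta A F n \<alpha>"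
        proof (intro allI impI)
          fix i a b assume i: "i < n" and ab: "(a, b) \<in> \<alpha> i"
          have aA: "a \<in> A" using alA i ab by auto
          show "map (\<lambda>k. cvec n i a b ! \<rho> k) [0..<2 ^ n] \<in> Delta A F n \<alpha>"
          proof (rule reindex_gen)
            show "\<forall>k<2 ^ n. \<rho> k < 2 ^ n" by (simp add: \<rho>_less)
            show "(\<exists>j<n. (\<forall>k<2 ^ n. bit (\<rho> k) i = bit k j) \<and> (a, b) \<in> \<alpha> j) \<or>
              (\<forall>k<2 ^ n. \<not> bit (\<rho> k) i) \<and> (a, a) \<in> \<alpha> 0 \<and> 0 < n \<or>
              (\<forall>k<2 ^ n. bit (\<rho> k) i) \<and> (b, b) \<in> \<alpha> 0 \<and> 0 < n"
              using i ab arefl[of 0 a] aA n1 by (cases "bit N i") (auto simp: \<rho>_def bit_mk)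
          qed
        qed
      qed
      have sup_iff: "\<rho> k = N \<longleftrightarrow> (\<forall>i<n. i \<in> I \<longrightarrow> bit k i)" for k
      proof -
        have "\<rho> k = N \<longleftrightarrow> \<rho> k = mk n (bit N)" using mk_bit[OF True] by simp
        also have "\<dots> \<longleftrightarrow> (\<forall>i<n. (bit k i \<and> bit N i) = bit N i)" by (simp add: \<rho>_def mk_eq_iff)
        also have "\<dots> \<longleftrightarrow> (\<forall>i<n. i \<in> I \<longrightarrow> bit k i)" by (auto simp: I_def)
        finally show ?thesis .
      qed
      have \<rho>_le: "\<rho> k \<le> N" for k
        using bits_le[OF \<rho>_less True] by (simp add: \<rho>_def bit_mk)
      define z where "z = map (\<lambda>j. q [map (\<lambda>k. u ! \<rho> k) [0..<2 ^ n] ! j,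
          map (\<lambda>k. w ! \<rho> k) [0..<2 ^ n] ! j, replicate (2 ^ n) c ! j]) [0..<2 ^ n]"
      have zF: "z \<in> Delta A F n \<alpha>" unfolding z_def
        by (rule Delta_q[OF algF alA qtF col[OF u] col[OF wF] cst[OF cA]])
      have z_eq: "z = ecube n (\<lambda>i. i \<in> I) c d"
      proof (intro nth_equalityI)
        fix k assume "k < length z"
        then have k: "k < 2 ^ n" by (simp add: z_def)
        show "z ! k = ecube n (\<lambda>i. i \<in> I) c d ! k"
        proof (cases "\<rho> k = N")
          case True
          then show ?thesis using k sup_iff[of k] q2[OF cA uA[OF \<open>N < 2^n\<close>]]
            by (simp add: z_def ecube_nth c_def d_def)
        next
          case False
          then have lt: "\<rho> k < N" using \<rho>_le[of k] by simp
          then have "u ! \<rho> k = w ! \<rho> k" using wu \<rho>_less by simp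
          moreover have ns: "\<not> (\<forall>i<n. i \<in> I \<longrightarrow> bit k i)" using sup_iff[of k] False by simp
          have e: "ecube n (\<lambda>i. i \<in> I) c d ! k = c" unfolding ecube_nth[OF k] using ns by (rule if_not_P)
          have "z ! k = c" using k q1[OF wA[OF \<rho>_less] cA] calculation by (simp add: z_def)
          then show ?thesis using e by simp
        qed
      qed (simp add: z_def)
      have eF: "ecube n (\<lambda>i. i \<in> I) c d \<in> Delta A F n \<alpha>" using zF z_eq by simp
      have eG: "ecube n (\<lambda>i. i \<in> I) c d \<in> Delta A G n \<alpha>" using EQ I eF by blast
      define w' where "w' = map (\<lambda>j. q [w ! j, replicate (2 ^ n) c ! j, ecube n (\<lambda>i. i \<in> I) c d ! j]) [0..<2 ^ n]"
      have w'F: "w' \<in> Delta A F n \<alpha>" unfolding w'_def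
        by (rule Delta_q[OF algF alA qtF wF cst[OF cA] eF])
      have alAG: "\<forall>i<n. \<alpha> i \<subseteq> A \<times> A" using alA .
      have w'G: "w' \<in> Delta A G n \<alpha>" unfolding w'_def
        by (rule Delta_q[OF algG alAG qtG wG cst[OF cA] eG])
      have "\<forall>k<Suc N. k < 2 ^ n \<longrightarrow> w' ! k = u ! k"
      proof (intro allI impI)
        fix k assume k: "k < Suc N" "k < 2 ^ n"
        show "w' ! k = u ! k"
        proof (cases "k = N")
          case True
          have "\<forall>i<n. i \<in> I \<longrightarrow> bit N i" by (simp add: I_def)
          then show ?thesis using True k q1[OF cA uA[OF k(2)]] by (simp add: w'_def ecube_nth c_def d_def)
        next
          case False
          then have kN: "k < N" using k by simp
          have "\<not> (\<forall>i<n. i \<in> I \<longrightarrow> bit k i)"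
          proof
            assume "\<forall>i<n. i \<in> I \<longrightarrow> bit k i"
            then have "N \<le> k" using bits_le[OF \<open>N < 2^n\<close> k(2)] by (simp add: I_def)
            then show False using kN by simp
          qed
          then have e: "ecube n (\<lambda>i. i \<in> I) c d ! k = c" unfolding ecube_nth[OF k(2)] by (rule if_not_P)
          show ?thesis using k kN wu q2[OF cA wA[OF k(2)]] e by (simp add: w'_def)
        qed
      qed
      then have "Inv (Suc N) w'" using w'F w'G by (simp add: Inv_def)
      then show ?thesis by blast
    qed
  qed
  have "\<exists>w. Inv N w" for N
  proof (induction N)
    case 0 then show ?case using inv0 by blast
  next
    case (Suc N) then show ?case using step by blast
  qed
  then obtain w where "Inv (2 ^ n) w" by blast
  then have wG: "w \<in> Delta A G n \<alpha>" and wu: "\<forall>k<2 ^ n. w ! k = u ! k"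
    and wF: "w \<in> Delta A F n \<alpha>" unfolding Inv_def by auto
  have "w = u" using wu Delta_len[OF wF] lu by (intro nth_equalityI) auto
  then show ?thesis using wG by simp
qed

theorem mainTheorem10:
  fixes A :: "'a set" and F G :: "'a ops" and q :: "'a list \<Rightarrow> 'a"
    and n :: nat and \<alpha> :: "nat \<Rightarrow> ('a \<times> 'a) set"
  assumes "is_algebra A F" and "is_algebra A G"
    and "is_malcev A F q" and "is_malcev A G q"
    and "n \<ge> 1"
    and "\<forall>i < n. congruence A F (\<alpha> i) \<and> congruence A G (\<alpha> i)"
  shows "(\<forall>I. I \<subseteq> {..<n} \<and> I \<noteq> {} \<longrightarrow> commutator_idx A F \<alpha> I = commutator_idx A G \<alpha> I)
         \<longleftrightarrow> Delta A F n \<alpha> = Delta A G n \<alpha>"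
proof -
  have cF: "\<forall>i<n. congruence A F (\<alpha> i)" and cG: "\<forall>i<n. congruence A G (\<alpha> i)" using assms(6) by auto
  have CF: "I \<subseteq> {..<n} \<Longrightarrow> I \<noteq> {} \<Longrightarrow>
      commutator_idx A F \<alpha> I = {(c, d). ecube n (\<lambda>i. i \<in> I) c d \<in> Delta A F n \<alpha>}" for I
    using CI[OF assms(1) assms(3) assms(5) cF] by blast
  have CG: "I \<subseteq> {..<n} \<Longrightarrow> I \<noteq> {} \<Longrightarrow>
      commutator_idx A G \<alpha> I = {(c, d). ecube n (\<lambda>i. i \<in> I) c d \<in> Delta A G n \<alpha>}" for I
    using CI[OF assms(2) assms(4) assms(5) cG] by blast
  show ?thesis
  proof
    assume h: "\<forall>I. I \<subseteq> {..<n} \<and> I \<noteq> {} \<longrightarrow> commutator_idx A F \<alpha> I = commutator_idx A G \<alpha> I"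
    have EQ: "\<forall>I c d. I \<subseteq> {..<n} \<and> I \<noteq> {} \<longrightarrow>
       (ecube n (\<lambda>i. i \<in> I) c d \<in> Delta A F n \<alpha> \<longleftrightarrow> ecube n (\<lambda>i. i \<in> I) c d \<in> Delta A G n \<alpha>)"
    proof (intro allI impI)
      fix I c d assume I: "I \<subseteq> {..<n} \<and> I \<noteq> {}"
      then have "{(c, d). ecube n (\<lambda>i. i \<in> I) c d \<in> Delta A F n \<alpha>}
          = {(c, d). ecube n (\<lambda>i. i \<in> I) c d \<in> Delta A G n \<alpha>}" using h CF CG by metis
      then show "ecube n (\<lambda>i. i \<in> I) c d \<in> Delta A F n \<alpha> \<longleftrightarrow> ecube n (\<lambda>i. i \<in> I) c d \<in> Delta A G n \<alpha>"
        by (metis (mono_tags, lifting) case_prod_conv mem_Collect_eq)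
    qed
    have EQ': "\<forall>I c d. I \<subseteq> {..<n} \<and> I \<noteq> {} \<longrightarrow>
       (ecube n (\<lambda>i. i \<in> I) c d \<in> Delta A G n \<alpha> \<longleftrightarrow> ecube n (\<lambda>i. i \<in> I) c d \<in> Delta A F n \<alpha>)"
      using EQ by blast
    show "Delta A F n \<alpha> = Delta A G n \<alpha>"
    proof
      show "Delta A F n \<alpha> \<subseteq> Delta A G n \<alpha>"
        using L4[OF assms(1) assms(3) assms(2) assms(4) assms(5) cF cG EQ] by blast
      show "Delta A G n \<alpha> \<subseteq> Delta A F n \<alpha>"
        using L4[OF assms(2) assms(4) assms(1) assms(3) assms(5) cG cF EQ'] by blast
    qed
  next
    assume h: "Delta A F n \<alpha> = Delta A G n \<alpha>"
    show "\<forall>I. I \<subseteq> {..<n} \<and> I \<noteq> {} \<longrightarrow> commutator_idx A F \<alpha> I = commutator_idx A G \<alpha> I"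
      using CF CG h by simp
  qed
qed

end
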